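(* Let $d\ge 1$ and let $\mathcal{F}\subseteq \binom{\mathbb{N}}{d}$ be a finite compressed family. Then for every family $\mathcal{F}'\subseteq \binom{\mathbb{N}}{d}$ with $|\mathcal{F}'|=|\mathcal{F}|$ one has $|\mathrm{Inc}(\mathcal{F}')|\ge|\mathrm{Inc}(\mathcal{F})|$.
   Context: $\mathbb{N}=\{1,2,3,\dots\}$. For $d\ge1$, $\binom{\mathbb{N}}{d}$ is the set of $d$-element subsets of $\mathbb{N}$; an element is written $\mathbf{u}=(u_1,\ldots,u_d)$ with $u_1<\cdots<u_d$. The squashed order on $\binom{\mathbb{N}}{d}$: $\mathbf{u}<\mathbf{v}$ iff the largest element of the symmetric difference $(\mathbf{u}\setminus\mathbf{v})\cup(\mathbf{v}\setminus\mathbf{u})$ belongs to $\mathbf{v}$; it is a well-order. A finite family $\mathcal{F}\subseteq\binom{\mathbb{N}}{d}$ is compressed if it consists of the $|\mathcal{F}|$ smallest elements of $\binom{\mathbb{N}}{d}$ in the squashed order. Let $\mathrm{Inc}_1$ be the set of maps $\pi\colon\mathbb{N}\to\mathbb{N}$ with $\pi(j)<\pi(j+1)$ and $\pi(j)\le j+1$ for all $j\ge1$. Such $\pi$ acts on $\mathbf{u}\in\binom{\mathbb{N}}{d}$ by $\pi(\mathbf{u})=(\pi(u_1),\ldots,\pi(u_d))$. For $\mathcal{F}\subseteq\binom{\mathbb{N}}{d}$, its Inc-image is $\mathrm{Inc}(\mathcal{F})=\{\pi(\mathbf{u})\mid \mathbf{u}\in\mathcal{F},\ \pi\in\mathrm{Inc}_1\}$.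 *)

theory Defs
  imports Main
begin

text \<open>Positive naturals \<open>\<nat> = {1,2,...}\<close> are modelled as elements of type nat that are \<open>\<ge> 1\<close>.\<close>

definition binom_N :: "nat \<Rightarrow> nat set set" where
  "binom_N d = {u. finite u \<and> card u = d \<and> (\<forall>x\<in>u. 1 \<le> x)}"

definition squashed_less :: "nat set \<Rightarrow> nat set \<Rightarrow> bool" where
  "squashed_less u v \<longleftrightarrow> u \<noteq> v \<and> Max ((u - v) \<union> (v - u)) \<in> v"

text \<open>Compressed: F consists of the |F| smallest elements of binom_N d in squashed order,
  i.e. F is a finite initial segment (down-set) of the well-order.\<close>
definition compressed :: "nat \<Rightarrow> nat set set \<Rightarrow> bool" where
  "compressed d F \<longleftrightarrow> finite F \<and> F \<subseteq> binom_N d \<and>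
     (\<forall>u v. v \<in> F \<longrightarrow> u \<in> binom_N d \<longrightarrow> squashed_less u v \<longrightarrow> u \<in> F)"

text \<open>Inc_1: maps \<open>\<nat> \<rightarrow> \<nat>\<close> with \<open>\<pi>(j) < \<pi>(j+1)\<close> and \<open>\<pi>(j) \<le> j+1\<close> for all j \<ge> 1
  (values at 0 are irrelevant).\<close>
definition Inc1 :: "(nat \<Rightarrow> nat) set" where
  "Inc1 = {\<pi>. \<forall>j\<ge>1. 1 \<le> \<pi> j \<and> \<pi> j < \<pi> (j + 1) \<and> \<pi> j \<le> j + 1}"

definition Inc_image :: "nat set set \<Rightarrow> nat set set" where
  "Inc_image F = {\<pi> ` u | u \<pi>. u \<in> F \<and> \<pi> \<in> Inc1}"

end

theory Submission
  imports Defs "HOL.Binomial_Plus"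
begin


fun ff :: "nat \<Rightarrow> nat \<Rightarrow> nat" where
  "ff 0 m = m"
| "ff (Suc e) m = (if m = 0 then 0 else
     (let n = (LEAST n. m \<le> Suc n choose Suc e) in (Suc n choose Suc e) + ff e (m - (n choose Suc e))))"

lemma ff_0 [simp]: "ff e 0 = 0"
  by (cases e) auto

lemma binom_mono_upper: "a \<le> b \<Longrightarrow> a choose k \<le> b choose k"
  by (rule binomial_right_mono)

lemma ff_B1:
  assumes "1 \<le> r" "r \<le> n choose e"
  shows "ff (Suc e) ((n choose Suc e) + r) = (Suc n choose Suc e) + ff e r"
proof -
  let ?m = "(n choose Suc e) + r"
  have le: "?m \<le> Suc n choose Suc e" using assms by simp
  have least: "(LEAST n'. ?m \<le> Suc n' choose Suc e) = n"
  proof (rule Least_equality)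
    show "?m \<le> Suc n choose Suc e" by (rule le)
  next
    fix y assume y: "?m \<le> Suc y choose Suc e"
    show "n \<le> y"
    proof (rule ccontr)
      assume "\<not> n \<le> y"
      then have "Suc y \<le> n" by simp
      then have "Suc y choose Suc e \<le> n choose Suc e" by (rule binom_mono_upper)
      with y assms show False by simp
    qed
  qed
  show ?thesis using assms least by (simp add: Let_def)
qed

declare ff.simps(2) [simp del]

lemma ff_B2: "e \<le> n \<Longrightarrow> ff e (n choose e) = Suc n choose e"
proof (induction e arbitrary: n)
  case 0 then show ?case by simp
next
  case (Suc e)
  then obtain n' where n: "n = Suc n'" by (cases n) auto
  with Suc.prems have en: "e \<le> n'" by simp
  have pos: "1 \<le> n' choose e" using en by (simp add: Suc_le_eq)
  have "ff (Suc e) (n choose Suc e) = ff (Suc e) ((n' choose Suc e) + (n' choose e))"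
    using n by (simp add: add.commute)
  also have "\<dots> = (Suc n' choose Suc e) + ff e (n' choose e)"
    using ff_B1[OF pos] by simp
  also have "\<dots> = (Suc n' choose Suc e) + (Suc n' choose e)" using Suc.IH[OF en] by simp
  also have "\<dots> = Suc n choose Suc e" using n by simp
  finally show ?case .
qed

lemma ff_B1':
  assumes "Suc e \<le> n" "r \<le> n choose e"
  shows "ff (Suc e) ((n choose Suc e) + r) = (Suc n choose Suc e) + ff e r"
proof (cases "r = 0")
  case True then show ?thesis using ff_B2[OF assms(1)] by simp
next
  case False then show ?thesis using ff_B1[of r n e] assms by simp
qed



lemma UNI:
  assumes "w \<le> k choose j" "w \<le> k choose Suc (Suc j)"
  shows "w \<le> k choose Suc j"
proof (cases "2 * Suc j \<le> k")
  case True
  then have "k choose j \<le> k choose Suc j" by (intro binomial_mono) auto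
  with assms show ?thesis by simp
next
  case False
  show ?thesis
  proof (cases "Suc (Suc j) \<le> k")
    case True
    have "k choose Suc (Suc j) \<le> k choose Suc j"
      using False True by (intro binomial_antimono) auto
    with assms show ?thesis by simp
  next
    case False2: False
    then have "k choose Suc (Suc j) = 0" by simp
    with assms show ?thesis by simp
  qed
qed

lemma BLOCK:
  assumes "1 \<le> m"
  obtains n r where "m = (n choose Suc e) + r" "1 \<le> r" "r \<le> n choose e"
proof -
  have ex: "\<exists>n. m \<le> Suc n choose Suc e"
  proof
    have "Suc (m + e) choose Suc e = Suc (m + e) choose m"
      using binomial_symmetric[of "Suc e" "Suc (m+e)"] by simp
    also have "\<dots> \<ge> Suc m choose m" by (rule binomial_right_mono) simp
    finally show "m \<le> Suc (m + e) choose Suc e"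
      using binomial_symmetric[of m "Suc m"] by simp
  qed
  define n where "n = (LEAST n. m \<le> Suc n choose Suc e)"
  have n1: "m \<le> Suc n choose Suc e" unfolding n_def by (rule LeastI_ex[OF ex])
  have n2: "n choose Suc e < m"
  proof (cases n)
    case 0 then show ?thesis using assms by simp
  next
    case (Suc n')
    have "\<not> m \<le> Suc n' choose Suc e"
    proof
      assume "m \<le> Suc n' choose Suc e"
      then have "n \<le> n'" unfolding n_def by (rule Least_le)
      with Suc show False by simp
    qed
    with Suc show ?thesis by simp
  qed
  show ?thesis
    by (rule that[of n "m - (n choose Suc e)"]) (use n1 n2 in auto)
qed

definition Sp :: "nat \<Rightarrow> bool" where
  "Sp E \<longleftrightarrow> (\<forall>a b. ff E (a + b) \<le> ff E a + ff E b)"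
definition SMp :: "nat \<Rightarrow> nat \<Rightarrow> bool" where
  "SMp E k \<longleftrightarrow> (\<forall>r d. r + d \<le> k choose E \<longrightarrow>
      ff E (k choose E) + ff E r \<le> ff E ((k choose E) - d) + ff E (r + d))"
definition SDp :: "nat \<Rightarrow> nat \<Rightarrow> bool" where
  "SDp E k \<longleftrightarrow> (\<forall>v. v \<le> k choose E \<longrightarrow>
      ff E (Suc k choose E) + ff E ((k choose E) - v) \<le> ff E (k choose E) + ff E ((Suc k choose E) - v))"
definition SSp :: "nat \<Rightarrow> nat \<Rightarrow> bool" where
  "SSp e k \<longleftrightarrow> (\<forall>v. v \<le> k choose e \<longrightarrow> v \<le> k choose Suc e \<longrightarrow>
      ff e (k choose e) + ff (Suc e) ((k choose Suc e) - v) \<le> ff (Suc e) (k choose Suc e) + ff e ((k choose e) - v))"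

lemma level0: "Sp 0" "SMp 0 k" "SDp 0 k"
  unfolding Sp_def SMp_def SDp_def by auto



lemma ff1: "ff (Suc e) 1 = 1 + ff e 1"
  using ff_B1[of 1 e e] by (simp add: binomial_eq_0)

lemma SD_from:
  assumes SS: "SSp e k" and SM: "SMp (Suc e) k"
  shows "SDp (Suc e) k"
  unfolding SDp_def
proof (intro allI impI)
  fix v assume v: "v \<le> k choose Suc e"
  let ?g = "ff (Suc e)" and ?h = "ff e"
  let ?B = "k choose Suc e" and ?L = "k choose e"
  have A: "Suc k choose Suc e = ?L + ?B" by simp
  show "?g (Suc k choose Suc e) + ?g (?B - v) \<le> ?g ?B + ?g ((Suc k choose Suc e) - v)"
  proof (cases "Suc e \<le> k")
    case False
    then have "?B = 0" by simp
    with v show ?thesis by simp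
  next
    case True
    have gA0: "?g ?B = Suc k choose Suc e" using ff_B2[OF True] by simp
    have gA: "?g (Suc k choose Suc e) = (Suc k choose Suc e) + ?h ?L"
      using ff_B1'[OF True, of ?L] A by (simp add: add.commute)
    show ?thesis
    proof (cases "v \<le> ?L")
      case True2: True
      have eq: "(Suc k choose Suc e) - v = ?B + (?L - v)" using True2 A by simp
      have gAv: "?g ((Suc k choose Suc e) - v) = (Suc k choose Suc e) + ?h (?L - v)"
        using ff_B1'[OF True, of "?L - v"] eq by simp
      have "?h ?L + ?g (?B - v) \<le> ?g ?B + ?h (?L - v)"
        using SS True2 v unfolding SSp_def by blast
      then show ?thesis using gA gAv gA0 by linarith
    next
      case False2: False
      define w where "w = v - ?L"
      have eqA: "(Suc k choose Suc e) - v = ?B - w" using False2 A v unfolding w_def by simp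
      have c1: "(?B - v) + ?L \<le> ?B" using False2 v by simp
      have s1: "?g ?B + ?g (?B - v) \<le> ?g (?B - ?L) + ?g (?B - v + ?L)"
        using SM[unfolded SMp_def, rule_format, OF c1] .
      have eq2: "?B - v + ?L = ?B - w" using False2 v unfolding w_def by simp
      have s2: "?h ?L + ?g (?B - ?L) \<le> ?g ?B + ?h (?L - ?L)"
        using SS False2 v unfolding SSp_def by auto
      show ?thesis using s1 s2 eq2 eqA gA gA0 by simp
    qed
  qed
qed

lemma SS_step:
  assumes S: "Sp e" and SD: "SDp e k" and SS: "SSp e k"
  shows "SSp e (Suc k)"
  unfolding SSp_def
proof (intro allI impI)
  fix v assume v1: "v \<le> Suc k choose e" and v2: "v \<le> Suc k choose Suc e"
  let ?g = "ff (Suc e)" and ?h = "ff e"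
  let ?B = "k choose Suc e" and ?L = "k choose e" and ?A = "Suc k choose Suc e" and ?X = "Suc k choose e"
  have A: "?A = ?L + ?B" by (simp only: binomial_Suc_Suc)
  show "?h ?X + ?g (?A - v) \<le> ?g ?A + ?h (?X - v)"
  proof (cases "k < e")
    case True
    have "?A = 0" using True by (simp add: binomial_eq_0)
    with v2 have v0: "v = 0" by linarith
    show ?thesis using v0 by simp
  next
    case False
    show ?thesis
    proof (cases "k = e")
      case True
      then have A1: "?A = 1" and X: "?X = Suc e" by simp_all
      show ?thesis
      proof (cases "v = 0")
        case True then show ?thesis by simp
      next
        case False
        with v2 A1 have v: "v = 1" by simp
        have "?h (e + 1) \<le> ?h e + ?h 1" using S unfolding Sp_def by blast
        then show ?thesis using v A1 X ff1[of e] by simp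
      qed
    next
      case False2: False
      with False have ek: "Suc e \<le> k" by simp
      have gA0: "?g ?B = ?A" using ff_B2[OF ek] by simp
      have gA: "?g ?A = ?A + ?h ?L"
        using ff_B1'[OF ek, of ?L] A by (simp add: add.commute)
      show ?thesis
      proof (cases "v \<le> ?L")
        case True
        have eq: "?A - v = ?B + (?L - v)" using True A by simp
        have gAv: "?g (?A - v) = ?A + ?h (?L - v)"
          using ff_B1'[OF ek, of "?L - v"] eq by simp
        have "?h ?X + ?h (?L - v) \<le> ?h ?L + ?h (?X - v)"
          using SD True unfolding SDp_def by blast
        then show ?thesis using gA gAv by linarith
      next
        case False3: False
        obtain e' where e: "e = Suc e'" using False3 v1 by (cases e) auto
        define w where "w = v - ?L"
        have X: "?X = (k choose e') + ?L" using e by simp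
        have w1: "w \<le> k choose e'" using v1 X unfolding w_def by simp
        have w2: "w \<le> ?B" using v2 A unfolding w_def by simp
        have wL: "w \<le> ?L" using UNI[of w k e'] w1 w2 e by simp
        have eqA: "?A - v = ?B - w" using False3 A v2 unfolding w_def by simp
        have eqX: "?X - w = (?X - v) + ?L" using False3 v1 unfolding w_def by simp
        have s1: "?h (?X - w) \<le> ?h (?X - v) + ?h ?L"
          using S eqX unfolding Sp_def by simp
        have s2: "?h ?X + ?h (?L - w) \<le> ?h ?L + ?h (?X - w)"
          using SD wL unfolding SDp_def by blast
        have s3: "?h ?L + ?g (?B - w) \<le> ?g ?B + ?h (?L - w)"
          using SS wL w2 unfolding SSp_def by blast
        have eqA': "?g (?A - v) = ?g (?B - w)" using eqA by simp
        show ?thesis using s1 s2 s3 eqA' gA gA0 by linarith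
      qed
    qed
  qed
qed

lemma SM_step:
  assumes S: "Sp e" and SMe: "SMp e k" and SM: "SMp (Suc e) k" and SD: "SDp (Suc e) k" and SS: "SSp e k"
  shows "SMp (Suc e) (Suc k)"
  unfolding SMp_def
proof (intro allI impI)
  fix r d assume rd: "r + d \<le> Suc k choose Suc e"
  let ?g = "ff (Suc e)" and ?h = "ff e"
  let ?B = "k choose Suc e" and ?L = "k choose e" and ?A = "Suc k choose Suc e"
  have A: "?A = ?L + ?B" by (simp only: binomial_Suc_Suc)
  show "?g ?A + ?g r \<le> ?g (?A - d) + ?g (r + d)"
  proof (cases "Suc e \<le> k")
    case False
    have "?A \<le> 1" using False by (cases "k = e") (simp_all add: binomial_eq_0)
    then have A01: "?A = 0 \<or> ?A = 1" by linarith
    from \<open>?A \<le> 1\<close> rd have "d = 0 \<or> (d = 1 \<and> r = 0)" by linarith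
    then show ?thesis
    proof
      assume "d = 0" then show ?thesis by simp
    next
      assume d1: "d = 1 \<and> r = 0"
      obtain c where c: "?A = c" by blast
      show ?thesis using d1 A01 unfolding c by auto
    qed
  next
    case ek: True
    have gA0: "?g ?B = ?A" using ff_B2[OF ek] by simp
    have blk: "\<And>t. t \<le> ?L \<Longrightarrow> ?g (?B + t) = ?A + ?h t"
      using ff_B1'[OF ek] by simp
    have gA: "?g ?A = ?A + ?h ?L" using blk[of ?L] A by (simp add: add.commute)
    show ?thesis
    proof (cases "r + d \<le> ?B")
      case True
      have s1: "?g ?B + ?g r \<le> ?g (?B - d) + ?g (r + d)"
        using SM True unfolding SMp_def by blast
      have s2: "?g ?A + ?g (?B - d) \<le> ?g ?B + ?g (?A - d)"
        using SD True unfolding SDp_def by simp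
      show ?thesis using s1 s2 by linarith
    next
      case False
      show ?thesis
      proof (cases "?B \<le> r")
        case True
        define t where "t = r - ?B"
        have r: "r = ?B + t" using True unfolding t_def by simp
        have td: "t + d \<le> ?L" using rd A r by simp
        have g1: "?g r = ?A + ?h t" using blk[of t] td r by simp
        have g2: "?g (r + d) = ?A + ?h (t + d)" using blk[of "t + d"] td r by (simp add: add.assoc)
        have g3: "?g (?A - d) = ?A + ?h (?L - d)"
          using blk[of "?L - d"] td A by (simp add: add.commute)
        have "?h ?L + ?h t \<le> ?h (?L - d) + ?h (t + d)"
          using SMe td unfolding SMp_def by blast
        then show ?thesis using g1 g2 g3 gA by linarith
      next
        case False2: False
        define v where "v = ?B - r"
        define u where "u = r + d - ?B"
        have du: "d = v + u" using False False2 unfolding u_def v_def by simp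
        have uL: "u \<le> ?L" using rd A unfolding u_def by simp
        have grd: "?g (r + d) = ?A + ?h u"
          using blk[OF uL] False unfolding u_def by simp
        have rv: "r = ?B - v" using False2 unfolding v_def by simp
        show ?thesis
        proof (cases "d \<le> ?L")
          case True
          have g3: "?g (?A - d) = ?A + ?h (?L - d)"
            using blk[of "?L - d"] True A by (simp add: add.commute)
          have vL: "v \<le> ?L" "v \<le> ?B" using True du unfolding v_def by simp_all
          have s1: "?h ?L + ?g (?B - v) \<le> ?g ?B + ?h (?L - v)"
            using SS vL unfolding SSp_def by blast
          have eq: "?L - v = (?L - d) + u" using True du by simp
          have s2: "?h (?L - v) \<le> ?h (?L - d) + ?h u"
            using S eq unfolding Sp_def by simp
          have gr: "?g (?B - v) = ?g r" using rv by simp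
          show ?thesis using s1 s2 g3 grd gA gA0 gr by linarith
        next
          case False3: False
          define w where "w = d - ?L"
          have eqA: "?A - d = ?B - w" using False3 A rd unfolding w_def by simp
          have c1: "r + (?L - u) \<le> ?B" using du uL False3 rv unfolding w_def v_def by simp
          have eq1: "r + (?L - u) = ?B - w" using du uL False3 False2 unfolding w_def v_def by simp
          have s1: "?g ?B + ?g r \<le> ?g (?B - (?L - u)) + ?g (r + (?L - u))"
            using SM[unfolded SMp_def, rule_format, OF c1] .
          have c2: "?L - u \<le> ?L" "?L - u \<le> ?B" using c1 by simp_all
          have s2: "?h ?L + ?g (?B - (?L - u)) \<le> ?g ?B + ?h (?L - (?L - u))"
            using SS c2 unfolding SSp_def by blast
          have eq2: "?L - (?L - u) = u" using uL by simp
          show ?thesis using s1 s2 eq1 eq2 eqA grd gA gA0 by simp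
        qed
      qed
    qed
  qed
qed



lemma level_k:
  assumes S: "Sp e" and SD: "\<forall>k. SDp e k" and SM: "\<forall>k. SMp e k"
  shows "SSp e k \<and> SMp (Suc e) k"
proof (induction k)
  case 0
  show ?case unfolding SSp_def SMp_def by auto
next
  case (Suc k)
  then have SS: "SSp e k" and SMk: "SMp (Suc e) k" by auto
  have SDk: "SDp (Suc e) k" by (rule SD_from[OF SS SMk])
  show ?case using SS_step[OF S SD[rule_format] SS] SM_step[OF S SM[rule_format] SMk SDk SS] by simp
qed

lemma ff_Suc_mono: "ff E m \<le> ff E (Suc m)"
proof (induction E arbitrary: m)
  case 0 then show ?case by simp
next
  case (Suc e)
  show ?case
  proof (cases "m = 0")
    case True then show ?thesis by simp
  next
    case False
    then obtain n r where m: "m = (n choose Suc e) + r" and r: "1 \<le> r" "r \<le> n choose e"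
      using BLOCK[of m e] by auto
    have fm: "ff (Suc e) m = (Suc n choose Suc e) + ff e r" using ff_B1[OF r] m by simp
    show ?thesis
    proof (cases "r < n choose e")
      case True
      have "ff (Suc e) (Suc m) = (Suc n choose Suc e) + ff e (Suc r)"
        using ff_B1[of "Suc r" n e] True m by simp
      then show ?thesis using fm Suc.IH[of r] by simp
    next
      case False
      then have rr: "r = n choose e" using r by simp
      then have en: "e \<le> n" using r by (metis binomial_eq_0_iff not_one_le_zero not_le)
      have sm: "Suc m = (Suc n choose Suc e) + 1" using m rr by simp
      have "ff (Suc e) (Suc m) = (Suc (Suc n) choose Suc e) + ff e 1"
        using ff_B1[of 1 "Suc n" e] sm en by (simp add: Suc_le_eq)
      moreover have "ff e r = Suc n choose e" using ff_B2[OF en] rr by simp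
      ultimately show ?thesis using fm by simp
    qed
  qed
qed

lemma ff_mono: "a \<le> b \<Longrightarrow> ff E a \<le> ff E b"
  using lift_Suc_mono_le[of "ff E"] ff_Suc_mono by blast

lemma ff_H:
  assumes S: "Sp e"
  shows "ff e (N choose Suc e) \<le> Suc N choose Suc e"
proof (induction N)
  case 0 then show ?case by simp
next
  case (Suc N)
  have "ff e (Suc N choose Suc e) \<le> ff e (N choose e) + ff e (N choose Suc e)"
    using S unfolding Sp_def by simp
  moreover have "ff e (N choose e) \<le> Suc N choose e"
  proof (cases "e \<le> N")
    case True then show ?thesis using ff_B2 by simp
  next
    case False then show ?thesis by (simp add: binomial_eq_0)
  qed
  ultimately show ?case using Suc.IH by simp
qed

lemma mono_e:
  assumes S: "Sp e"
  shows "ff e m \<le> ff (Suc e) m"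
proof (cases "m = 0")
  case True then show ?thesis by simp
next
  case False
  then obtain n r where m: "m = (n choose Suc e) + r" and r: "1 \<le> r" "r \<le> n choose e"
    using BLOCK[of m e] by auto
  have fm: "ff (Suc e) m = (Suc n choose Suc e) + ff e r" using ff_B1[OF r] m by simp
  have "ff e m \<le> ff e (n choose Suc e) + ff e r" using S m unfolding Sp_def by simp
  also have "\<dots> \<le> (Suc n choose Suc e) + ff e r" using ff_H[OF S, of n] by simp
  finally show ?thesis using fm by simp
qed

lemma S_step:
  assumes S: "Sp e" and SM: "\<forall>k. SMp (Suc e) k"
  shows "Sp (Suc e)"
  unfolding Sp_def
proof (intro allI)
  fix a b
  let ?g = "ff (Suc e)" and ?h = "ff e"
  show "?g (a + b) \<le> ?g a + ?g b"
  proof (cases "a = 0 \<or> b = 0")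
    case True then show ?thesis by auto
  next
    case False
    then obtain n r where m: "a + b = (n choose Suc e) + r" and r: "1 \<le> r" "r \<le> n choose e"
      using BLOCK[of "a + b" e] by auto
    have fm: "?g (a + b) = (Suc n choose Suc e) + ?h r" using ff_B1[OF r] m by simp
    show ?thesis
    proof (cases "a \<le> n choose Suc e \<and> b \<le> n choose Suc e")
      case True
      then have en: "Suc e \<le> n" using False by (metis binomial_eq_0_iff le_zero_eq not_le)
      have c: "r + ((n choose Suc e) - a) = b" using m True by simp
      have "?g (n choose Suc e) + ?g r \<le> ?g ((n choose Suc e) - ((n choose Suc e) - a)) + ?g b"
        using SM True c unfolding SMp_def by (metis order_refl)
      moreover have "(n choose Suc e) - ((n choose Suc e) - a) = a" using True by simp
      moreover have "?g (n choose Suc e) = Suc n choose Suc e" using ff_B2[OF en] .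
      moreover have "?h r \<le> ?g r" using mono_e[OF S] .
      ultimately show ?thesis using fm by simp
    next
      case False2: False
      have key: "\<And>x y. x + y = a + b \<Longrightarrow> x > n choose Suc e \<Longrightarrow> ?g (a + b) \<le> ?g x + ?g y"
      proof -
        fix x y assume xy: "x + y = a + b" and x: "x > n choose Suc e"
        define rx where "rx = x - (n choose Suc e)"
        have x': "x = (n choose Suc e) + rx" "1 \<le> rx" "rx \<le> n choose e" "rx + y = r"
          using x xy m r unfolding rx_def by auto
        have "?g x = (Suc n choose Suc e) + ?h rx" using ff_B1[OF x'(2,3)] x'(1) by simp
        moreover have "?h r \<le> ?h rx + ?h y" using S x'(4) unfolding Sp_def by metis
        moreover have "?h y \<le> ?g y" using mono_e[OF S] .
        ultimately show "?g (a + b) \<le> ?g x + ?g y" using fm by simp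
      qed
      show ?thesis
      proof (cases "a > n choose Suc e")
        case True then show ?thesis using key[of a b] by simp
      next
        case False
        then have "b > n choose Suc e" using False2 by simp
        then show ?thesis using key[of b a] by (simp add: add.commute)
      qed
    qed
  qed
qed

lemma all_levels: "Sp e \<and> (\<forall>k. SMp e k) \<and> (\<forall>k. SDp e k)"
proof (induction e)
  case 0 then show ?case using level0 by simp
next
  case (Suc e)
  then have S: "Sp e" and SD: "\<forall>k. SDp e k" and SM: "\<forall>k. SMp e k" by auto
  have SS: "\<forall>k. SSp e k" and SM': "\<forall>k. SMp (Suc e) k" using level_k[OF S SD SM] by auto
  have SD': "\<forall>k. SDp (Suc e) k" using SD_from SS SM' by blast
  show ?case using S_step[OF S SM'] SM' SD' by simp
qed

lemma ff_S: "ff E (a + b) \<le> ff E a + ff E b"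
  using all_levels[of E] unfolding Sp_def by blast

lemma ff_SM: "r + d \<le> k choose E \<Longrightarrow> ff E (k choose E) + ff E r \<le> ff E ((k choose E) - d) + ff E (r + d)"
  using all_levels[of E] unfolding SMp_def by blast



lemma ff_L:
  assumes "Suc e \<le> k"
  shows "(Suc k choose Suc e) + ff e d \<le> ff (Suc e) ((k choose Suc e) + d)"
  using assms
proof (induction d arbitrary: k rule: less_induct)
  case (less d)
  show ?case
  proof (cases "d \<le> k choose e")
    case True then show ?thesis using ff_B1'[OF less.prems True] by simp
  next
    case False
    define d' where "d' = d - (k choose e)"
    have ek: "e \<le> k" using less.prems by simp
    have pos: "k choose e \<ge> 1" using ek by (simp add: Suc_le_eq)
    have dd: "d = (k choose e) + d'" using False unfolding d'_def by simp
    have lt: "d' < d" using dd pos by linarith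
    have "(Suc (Suc k) choose Suc e) + ff e d' \<le> ff (Suc e) ((Suc k choose Suc e) + d')"
      using less.IH[OF lt, of "Suc k"] less.prems by simp
    moreover have "ff (Suc e) ((Suc k choose Suc e) + d') = ff (Suc e) ((k choose Suc e) + d)"
      using dd by (simp add: add_ac)
    moreover have "ff e d \<le> ff e (k choose e) + ff e d'" using ff_S dd by simp
    moreover have "ff e (k choose e) = Suc k choose e" using ff_B2[OF ek] .
    moreover have "Suc (Suc k) choose Suc e = (Suc k choose e) + (Suc k choose Suc e)" by simp
    ultimately show ?thesis by linarith
  qed
qed

lemma ff_1: "1 \<le> M \<Longrightarrow> ff 1 M = M + 1"
  using ff_B1[of 1 "M - 1" 0] by simp

lemma ff_K:
  assumes "1 \<le> x" "x \<le> M"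
  shows "ff (Suc e) M \<le> ff e x + max (ff (Suc e) (M - x)) M"
  using assms
proof (induction e arbitrary: M x)
  case 0
  then show ?case using ff_1[of M] by simp
next
  case (Suc e)
  let ?F = "ff (Suc (Suc e))" and ?G = "ff (Suc e)" and ?H = "ff e"
  obtain n r where M: "M = (n choose Suc (Suc e)) + r" and r: "1 \<le> r" "r \<le> n choose Suc e"
    using BLOCK[of M "Suc e"] Suc.prems by auto
  have fM: "?F M = (Suc n choose Suc (Suc e)) + ?G r" using ff_B1[OF r] M by simp
  have pasc: "Suc n choose Suc (Suc e) = (n choose Suc e) + (n choose Suc (Suc e))" by simp
  show ?case
  proof (cases "x < r")
    case True
    have r1: "1 \<le> r - x" "r - x \<le> n choose Suc e" using True r by auto
    have "?F (M - x) = (Suc n choose Suc (Suc e)) + ?G (r - x)"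
      using ff_B1[OF r1] M True by (simp add: add_diff_assoc)
    moreover have "?G r \<le> ?G x + ?G (r - x)" using ff_S[of "Suc e" x "r - x"] True by simp
    ultimately show ?thesis using fM by simp
  next
    case False
    show ?thesis
    proof (cases "x = r")
      case True
      show ?thesis
      proof (cases "Suc (Suc e) \<le> n")
        case True2: True
        have "?F (M - x) = Suc n choose Suc (Suc e)" using ff_B2[OF True2] M True by simp
        then show ?thesis using fM True by simp
      next
        case False2: False
        have en: "Suc e \<le> n" using r by (metis binomial_eq_0_iff not_one_le_zero not_le le_trans)
        have nn: "n = Suc e" using en False2 by simp
        then have "Suc n choose Suc (Suc e) = 1" by simp
        then show ?thesis using fM True Suc.prems by simp
      qed
    next
      case False2: False
      with False have xr: "x > r" by simp
      define y where "y = M - x"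
      have yl: "y < n choose Suc (Suc e)" using xr M Suc.prems unfolding y_def by simp
      then have en: "Suc (Suc e) \<le> n" by (metis binomial_eq_0_iff not_less0 not_le)
      then obtain n1 where n1: "n = Suc n1" by (cases n) auto
      have en1: "Suc e \<le> n1" using en n1 by simp
      have split: "n choose Suc (Suc e) = (n1 choose Suc e) + (n1 choose Suc (Suc e))" using n1 by simp
      have gC: "?G (n1 choose Suc e) = n choose Suc e" using ff_B2[OF en1] n1 by simp
      show ?thesis
      proof (cases "y \<le> n1 choose Suc (Suc e)")
        case True
        have Fy: "?F y \<le> n choose Suc (Suc e)"
        proof (cases "Suc (Suc e) \<le> n1")
          case True3: True
          have "?F y \<le> ?F (n1 choose Suc (Suc e))" using ff_mono True by blast
          then show ?thesis using ff_B2[OF True3] n1 by simp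
        next
          case False3: False
          then have "y = 0" using True by (simp add: binomial_eq_0)
          then show ?thesis by simp
        qed
        define dl where "dl = x - (n1 choose Suc e)"
        have x: "x = (n1 choose Suc e) + dl" and dlr: "r \<le> dl"
          using True M split Suc.prems unfolding dl_def y_def by auto
        have L: "(n choose Suc e) + ?H dl \<le> ?G x"
          using ff_L[OF en1, of dl] x n1 by simp
        have Hm: "?H r \<le> ?H dl" using ff_mono dlr by blast
        have IH: "?G r \<le> ?H r + max (?G (r - r)) r" using Suc.IH[of r r] r by simp
        then have IH': "?G r \<le> ?H r + r" by simp
        show ?thesis using fM pasc L Hm IH' M by simp
      next
        case False3: False
        define s where "s = y - (n1 choose Suc (Suc e))"
        have s: "1 \<le> s" "s \<le> n1 choose Suc e" "y = (n1 choose Suc (Suc e)) + s"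
          using False3 yl split unfolding s_def by auto
        have Fy: "?F y = (n choose Suc (Suc e)) + ?G s" using ff_B1[OF s(1,2)] s(3) n1 by simp
        have xs: "x + s = (n1 choose Suc e) + r" using s(3) split M Suc.prems unfolding y_def by simp
        show ?thesis
        proof (cases "r \<le> s")
          case True
          have c: "r + (s - r) \<le> n1 choose Suc e" using True s by simp
          have sm: "?G (n1 choose Suc e) + ?G r \<le> ?G ((n1 choose Suc e) - (s - r)) + ?G (r + (s - r))"
            using ff_SM[OF c] .
          have xe: "(n1 choose Suc e) - (s - r) = x" using xs True by simp
          have "?F M \<le> ?G x + ?F y" using fM pasc sm xe gC Fy True by simp
          then show ?thesis by (simp add: y_def)
        next
          case False4: False
          define dl where "dl = r - s"
          have x: "x = (n1 choose Suc e) + dl" using xs False4 unfolding dl_def by simp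
          have L: "(n choose Suc e) + ?H dl \<le> ?G x"
            using ff_L[OF en1, of dl] x n1 by simp
          have IH: "?G r \<le> ?H dl + max (?G (r - dl)) r"
            using Suc.IH[of dl r] False4 unfolding dl_def by simp
          have rs: "r - dl = s" using False4 unfolding dl_def by simp
          have "?F M \<le> ?G x + max (?F y) M"
            using fM pasc L IH rs Fy M by (simp add: max_def split: if_splits)
          then show ?thesis by (simp add: y_def)
        qed
      qed
    qed
  qed
qed



definition sig :: "nat \<Rightarrow> nat \<Rightarrow> nat" where
  "sig k j = (if j < k then j else Suc j)"

definition Incs :: "nat set set \<Rightarrow> nat set set" where
  "Incs F = {sig k ` u | u k. u \<in> F \<and> 1 \<le> k}"

lemma sig_Inc1: "1 \<le> k \<Longrightarrow> sig k \<in> Inc1"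
  unfolding Inc1_def sig_def by auto

lemma inj_sig: "inj (sig k)"
  unfolding inj_def sig_def by auto

lemma Inc1_ge: assumes "\<pi> \<in> Inc1" shows "1 \<le> j \<Longrightarrow> j \<le> \<pi> j"
proof (induction j)
  case 0 then show ?case by simp
next
  case (Suc j)
  show ?case
  proof (cases "j = 0")
    case True then show ?thesis using assms unfolding Inc1_def by auto
  next
    case False
    then have "j \<le> \<pi> j" using Suc.IH by simp
    moreover have "\<pi> j < \<pi> (j + 1)" using assms False unfolding Inc1_def by auto
    ultimately show ?thesis by simp
  qed
qed

lemma Inc1_sig:
  assumes P: "\<pi> \<in> Inc1" and fin: "finite u" and pos: "\<forall>x\<in>u. 1 \<le> x"
  shows "\<exists>k\<ge>1. \<pi> ` u = sig k ` u"
proof -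
  have le: "\<And>j. 1 \<le> j \<Longrightarrow> \<pi> j \<le> Suc j" using P unfolding Inc1_def by auto
  have ge: "\<And>j. 1 \<le> j \<Longrightarrow> j \<le> \<pi> j" using Inc1_ge[OF P] .
  have lt: "\<And>j. 1 \<le> j \<Longrightarrow> \<pi> j < \<pi> (Suc j)" using P unfolding Inc1_def by auto
  show ?thesis
  proof (cases "\<exists>j\<ge>1. \<pi> j = Suc j")
    case True
    define k where "k = (LEAST j. 1 \<le> j \<and> \<pi> j = Suc j)"
    have k: "1 \<le> k" "\<pi> k = Suc k" unfolding k_def using LeastI_ex[of "\<lambda>j. 1 \<le> j \<and> \<pi> j = Suc j"] True by auto
    have below: "\<And>j. 1 \<le> j \<Longrightarrow> j < k \<Longrightarrow> \<pi> j = j"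
    proof -
      fix j assume j: "1 \<le> j" "j < k"
      have "\<not> (1 \<le> j \<and> \<pi> j = Suc j)" using j(2) unfolding k_def using not_less_Least by blast
      then show "\<pi> j = j" using j le[of j] ge[of j] by auto
    qed
    have above: "\<And>i. \<pi> (k + i) = Suc (k + i)"
    proof -
      fix i show "\<pi> (k + i) = Suc (k + i)"
      proof (induction i)
        case 0 then show ?case using k by simp
      next
        case (Suc i)
        have "\<pi> (k + i) < \<pi> (Suc (k + i))" using lt[of "k + i"] k by simp
        moreover have "\<pi> (Suc (k + i)) \<le> Suc (Suc (k + i))" using le[of "Suc (k+i)"] by simp
        ultimately show ?case using Suc.IH by simp
      qed
    qed
    have "\<forall>x\<in>u. \<pi> x = sig k x"
    proof
      fix x assume "x \<in> u"
      then have x1: "1 \<le> x" using pos by auto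
      show "\<pi> x = sig k x"
      proof (cases "x < k")
        case True then show ?thesis using below[OF x1 True] unfolding sig_def by simp
      next
        case False
        then obtain i where "x = k + i" by (metis le_add_diff_inverse not_less)
        then show ?thesis using above[of i] False unfolding sig_def by simp
      qed
    qed
    then have "\<pi> ` u = sig k ` u" by (intro image_cong) auto
    then show ?thesis using k by blast
  next
    case False
    define k where "k = Suc (Max (insert 0 u))"
    have "\<forall>x\<in>u. \<pi> x = sig k x"
    proof
      fix x assume xu: "x \<in> u"
      then have x1: "1 \<le> x" using pos by auto
      have "x \<le> Max (insert 0 u)" using fin xu by simp
      then have "x < k" unfolding k_def by simp
      moreover have "\<pi> x = x" using False x1 le[of x] ge[of x] by (metis le_SucE le_antisym)
      ultimately show "\<pi> x = sig k x" unfolding sig_def by simp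
    qed
    then have "\<pi> ` u = sig k ` u" by (intro image_cong) auto
    then show ?thesis unfolding k_def by (metis le_add1 plus_1_eq_Suc)
  qed
qed

lemma Inc_eq:
  assumes "\<forall>u\<in>F. finite u \<and> (\<forall>x\<in>u. 1 \<le> x)"
  shows "Inc_image F = Incs F"
proof
  show "Inc_image F \<subseteq> Incs F"
  proof
    fix v assume "v \<in> Inc_image F"
    then obtain u \<pi> where v: "v = \<pi> ` u" "u \<in> F" "\<pi> \<in> Inc1" unfolding Inc_image_def by auto
    then obtain k where "k \<ge> 1" "\<pi> ` u = sig k ` u" using Inc1_sig assms by meson
    then show "v \<in> Incs F" unfolding Incs_def using v by auto
  qed
next
  show "Incs F \<subseteq> Inc_image F"
    unfolding Incs_def Inc_image_def using sig_Inc1 by blast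
qed

lemma sig_id: "\<forall>x\<in>u. x < k \<Longrightarrow> sig k ` u = u"
  unfolding sig_def by (simp add: image_cong[of u u _ id] cong: image_cong)

lemma self_Incs:
  assumes "\<forall>u\<in>F. finite u"
  shows "F \<subseteq> Incs F"
proof
  fix u assume u: "u \<in> F"
  define k where "k = Suc (Max (insert 0 u))"
  have "\<forall>x\<in>u. x < k" using assms u unfolding k_def by (simp add: le_imp_less_Suc)
  then have "sig k ` u = u" by (rule sig_id)
  moreover have "1 \<le> k" unfolding k_def by simp
  ultimately show "u \<in> Incs F" unfolding Incs_def using u by (metis (mono_tags, lifting) mem_Collect_eq)
qed

lemma Incs_mono: "F \<subseteq> G \<Longrightarrow> Incs F \<subseteq> Incs G"
  unfolding Incs_def by blast



lemma Incs_I: "u \<in> F \<Longrightarrow> 1 \<le> k \<Longrightarrow> sig k ` u \<in> Incs F"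
  unfolding Incs_def by blast

lemma sig_le: "x < L \<Longrightarrow> sig k x \<le> L"
  unfolding sig_def by auto

lemma decomp:
  assumes pos: "\<forall>u\<in>F. finite u \<and> (\<forall>x\<in>u. 1 \<le> x)"
    and bound: "\<forall>u\<in>F. \<forall>x\<in>u. x \<le> L" and L1: "1 \<le> L"
  defines "T \<equiv> {u\<in>F. L \<in> u}" and "R \<equiv> {u\<in>F. L \<notin> u}" and "T' \<equiv> (\<lambda>u. u - {L}) ` {u\<in>F. L \<in> u}"
  shows "Incs F = (Incs R \<union> T) \<union> insert (Suc L) ` Incs T'"
    and "(Incs R \<union> T) \<inter> insert (Suc L) ` Incs T' = {}"
    and "inj_on (insert (Suc L)) (Incs T')"
    and "\<forall>v \<in> Incs R \<union> T. \<forall>x\<in>v. x \<le> L"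
    and "finite (Incs R)" and "finite (Incs T')"
proof -
  have bR: "\<forall>v\<in>Incs R. \<forall>x\<in>v. x \<le> L"
  proof (intro ballI)
    fix v x assume v: "v \<in> Incs R" and x: "x \<in> v"
    then obtain u k where "v = sig k ` u" "u \<in> R" unfolding Incs_def by auto
    with x obtain y where "y \<in> u" "x = sig k y" "y < L" using bound unfolding R_def
      by (metis (mono_tags, lifting) imageE le_neq_implies_less mem_Collect_eq)
    then show "x \<le> L" using sig_le by simp
  qed
  have bT': "\<forall>v\<in>Incs T'. \<forall>x\<in>v. x \<le> L"
  proof (intro ballI)
    fix v x assume v: "v \<in> Incs T'" and x: "x \<in> v"
    then obtain w k where vw: "v = sig k ` w" "w \<in> T'" unfolding Incs_def by auto
    then obtain u0 where u0: "w = u0 - {L}" "u0 \<in> F" unfolding T'_def by auto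
    from x vw obtain y where y: "y \<in> w" "x = sig k y" by auto
    have "y < L" using y u0 bound by (auto simp: le_neq_implies_less)
    then show "x \<le> L" using sig_le y by simp
  qed
  show bRT: "\<forall>v \<in> Incs R \<union> T. \<forall>x\<in>v. x \<le> L" using bR bound unfolding T_def by auto
  show "(Incs R \<union> T) \<inter> insert (Suc L) ` Incs T' = {}"
  proof (rule equals0I)
    fix z assume z: "z \<in> (Incs R \<union> T) \<inter> insert (Suc L) ` Incs T'"
    then have "Suc L \<in> z" by auto
    moreover have "\<forall>x\<in>z. x \<le> L" using z bRT by blast
    ultimately show False by fastforce
  qed
  show "inj_on (insert (Suc L)) (Incs T')"
  proof (rule inj_onI)
    fix X Y assume XY: "X \<in> Incs T'" "Y \<in> Incs T'" "insert (Suc L) X = insert (Suc L) Y"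
    have "\<forall>x\<in>X. x \<le> L" "\<forall>x\<in>Y. x \<le> L" using bT' XY by blast+
    then have "Suc L \<notin> X" "Suc L \<notin> Y" by fastforce+
    with XY(3) show "X = Y" by (metis insert_ident)
  qed
  show "finite (Incs R)"
    by (rule finite_subset[of _ "Pow {..L}"]) (use bR in auto)
  show "finite (Incs T')"
    by (rule finite_subset[of _ "Pow {..L}"]) (use bT' in auto)
  have finF: "\<forall>u\<in>F. finite u" using pos by auto
  show "Incs F = (Incs R \<union> T) \<union> insert (Suc L) ` Incs T'"
  proof
    show "Incs F \<subseteq> (Incs R \<union> T) \<union> insert (Suc L) ` Incs T'"
    proof
      fix v assume "v \<in> Incs F"
      then obtain u k where v: "v = sig k ` u" "u \<in> F" "1 \<le> k" unfolding Incs_def by auto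
      show "v \<in> (Incs R \<union> T) \<union> insert (Suc L) ` Incs T'"
      proof (cases "L \<in> u")
        case False
        then have "u \<in> R" using v unfolding R_def by simp
        then show ?thesis using v unfolding Incs_def by blast
      next
        case True
        show ?thesis
        proof (cases "L < k")
          case True2: True
          have "\<forall>x\<in>u. x < k" using bound v True2 by fastforce
          then have "v = u" using v sig_id by simp
          then show ?thesis using v True unfolding T_def by simp
        next
          case False2: False
          have u: "u = insert L (u - {L})" using True by auto
          have "sig k L = Suc L" using False2 unfolding sig_def by simp
          then have "v = insert (Suc L) (sig k ` (u - {L}))" using v u by (metis image_insert)
          moreover have "u - {L} \<in> T'" unfolding T'_def T_def using v True by auto
          then have "sig k ` (u - {L}) \<in> Incs T'" unfolding Incs_def using v by blast
          ultimately show ?thesis by blast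
        qed
      qed
    qed
  next
    show "(Incs R \<union> T) \<union> insert (Suc L) ` Incs T' \<subseteq> Incs F"
    proof -
      have "R \<subseteq> F" unfolding R_def by blast
      then have "Incs R \<subseteq> Incs F" by (rule Incs_mono)
      moreover have "T \<subseteq> F" unfolding T_def by blast
      then have "T \<subseteq> Incs F" using self_Incs[OF finF] by blast
      moreover have "insert (Suc L) ` Incs T' \<subseteq> Incs F"
      proof
        fix z assume "z \<in> insert (Suc L) ` Incs T'"
        then obtain y where zy: "z = insert (Suc L) y" "y \<in> Incs T'" by blast
        from zy(2) obtain w k where wk: "y = sig k ` w" "w \<in> T'" "1 \<le> k" unfolding Incs_def by blast
        from wk(2) obtain u where uw: "w = u - {L}" "u \<in> F" "L \<in> u" unfolding T'_def by blast
        have z: "z = insert (Suc L) (sig k ` w)" "1 \<le> k" "w = u - {L}" "u \<in> F" "L \<in> u"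
          using zy(1) wk(1,3) uw by simp_all
        have u: "u = insert L w" using z(3,5) by blast
        have wL: "\<forall>x\<in>w. x < L"
        proof
          fix x assume "x \<in> w"
          then have "x \<in> u" "x \<noteq> L" using z by auto
          then show "x < L" using bound z by (meson le_neq_implies_less)
        qed
        show "z \<in> Incs F"
        proof (cases "k \<le> L")
          case True
          have "sig k L = Suc L" using True unfolding sig_def by simp
          then have "z = sig k ` u" using z(1) u by simp
          then show ?thesis using Incs_I[OF z(4,2)] by simp
        next
          case False
          have "sig k ` w = w" using wL False by (intro sig_id) auto
          moreover have "sig L ` w = w" using wL by (intro sig_id) auto
          moreover have "sig L L = Suc L" unfolding sig_def by simp
          ultimately have "z = sig L ` u" using z(1) u by simp
          then show ?thesis using Incs_I[OF z(4) L1] by simp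
        qed
      qed
      ultimately show ?thesis by blast
    qed
  qed
qed



lemma setupL:
  assumes FB: "F \<subseteq> binom_N (Suc e)" and fin: "finite F" and ne: "F \<noteq> {}"
  shows "finite (\<Union>F)" "\<forall>u\<in>F. \<forall>x\<in>u. x \<le> Max (\<Union>F)" "1 \<le> Max (\<Union>F)"
    "\<exists>v\<in>F. Max (\<Union>F) \<in> v" "\<forall>u\<in>F. finite u \<and> (\<forall>x\<in>u. 1 \<le> x)"
proof -
  show pos: "\<forall>u\<in>F. finite u \<and> (\<forall>x\<in>u. 1 \<le> x)" using FB unfolding binom_N_def by auto
  show finU: "finite (\<Union>F)" using fin pos by auto
  obtain u where u: "u \<in> F" using ne by auto
  then have "card u = Suc e" using FB unfolding binom_N_def by auto
  then have "u \<noteq> {}" by auto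
  then have neU: "\<Union>F \<noteq> {}" using u by auto
  show "\<forall>u\<in>F. \<forall>x\<in>u. x \<le> Max (\<Union>F)" using finU by (meson Max_ge UnionI)
  have "Max (\<Union>F) \<in> \<Union>F" using Max_in[OF finU neU] .
  then show "\<exists>v\<in>F. Max (\<Union>F) \<in> v" by auto
  then show "1 \<le> Max (\<Union>F)" using pos by auto
qed

lemma card_Incs_split:
  assumes pos: "\<forall>u\<in>F. finite u \<and> (\<forall>x\<in>u. 1 \<le> x)"
    and bound: "\<forall>u\<in>F. \<forall>x\<in>u. x \<le> L" and L1: "1 \<le> L" and fin: "finite F"
  shows "card (Incs F) = card (Incs {u\<in>F. L \<notin> u} \<union> {u\<in>F. L \<in> u}) + card (Incs ((\<lambda>u. u - {L}) ` {u\<in>F. L \<in> u}))"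
proof -
  note D = decomp[OF pos bound L1]
  have f1: "finite (Incs {u\<in>F. L \<notin> u} \<union> {u\<in>F. L \<in> u})" using D(5) fin by simp
  have f2: "finite (insert (Suc L) ` Incs ((\<lambda>u. u - {L}) ` {u\<in>F. L \<in> u}))" using D(6) by simp
  have "card (Incs F) = card (Incs {u\<in>F. L \<notin> u} \<union> {u\<in>F. L \<in> u}) + card (insert (Suc L) ` Incs ((\<lambda>u. u - {L}) ` {u\<in>F. L \<in> u}))"
    using D(1) card_Un_disjoint[OF f1 f2 D(2)] by simp
  also have "card (insert (Suc L) ` Incs ((\<lambda>u. u - {L}) ` {u\<in>F. L \<in> u})) = card (Incs ((\<lambda>u. u - {L}) ` {u\<in>F. L \<in> u}))"
    using card_image[OF D(3)] .
  finally show ?thesis .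
qed

lemma card_T':
  "card ((\<lambda>u. u - {L}) ` {u\<in>F. L \<in> u}) = card {u\<in>F. L \<in> u}"
proof (rule card_image)
  show "inj_on (\<lambda>u. u - {L}) {u\<in>F. L \<in> u}"
    by (rule inj_onI) (metis (mono_tags, lifting) insert_Diff mem_Collect_eq)
qed

lemma T'_binom:
  assumes "F \<subseteq> binom_N (Suc e)"
  shows "(\<lambda>u. u - {L}) ` {u\<in>F. L \<in> u} \<subseteq> binom_N e"
  using assms unfolding binom_N_def by auto

lemma LB: "F \<subseteq> binom_N d \<Longrightarrow> finite F \<Longrightarrow> ff d (card F) \<le> card (Incs F)"
proof (induction d arbitrary: F)
  case 0
  have "\<forall>u\<in>F. finite u" using 0 unfolding binom_N_def by auto
  then have sub: "F \<subseteq> Incs F" by (rule self_Incs)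
  have "Incs F \<subseteq> {{}}" using 0 unfolding Incs_def binom_N_def by auto
  then have "finite (Incs F)" by (rule finite_subset) simp
  then show ?case using card_mono[OF _ sub] by simp
next
  case (Suc e)
  show ?case using Suc.prems
  proof (induction "card F" arbitrary: F rule: less_induct)
    case less
    show ?case
    proof (cases "F = {}")
      case True then show ?thesis by simp
    next
      case False
      note S = setupL[OF less.prems False]
      define L where "L = Max (\<Union>F)"
      define T where "T = {u\<in>F. L \<in> u}"
      define R where "R = {u\<in>F. L \<notin> u}"
      define T' where "T' = (\<lambda>u. u - {L}) ` T"
      have bound: "\<forall>u\<in>F. \<forall>x\<in>u. x \<le> L" and L1: "1 \<le> L" using S unfolding L_def by auto
      have cardsplit: "card (Incs F) = card (Incs R \<union> T) + card (Incs T')"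
        using card_Incs_split[OF S(5) bound L1 less.prems(2)] unfolding R_def T_def T'_def by simp
      have D5: "finite (Incs R)" using decomp(5)[OF S(5) bound L1] unfolding R_def by simp
      have Tne: "T \<noteq> {}" using S(4) unfolding T_def L_def by auto
      have finT: "finite T" using less.prems(2) unfolding T_def by simp
      have cT: "card T' = card T" unfolding T'_def T_def by (rule card_T')
      have x1: "1 \<le> card T" using Tne finT by (simp add: Suc_le_eq card_gt_0_iff)
      have FRT: "F = R \<union> T" unfolding R_def T_def by auto
      have RT: "R \<inter> T = {}" unfolding R_def T_def by auto
      have finR: "finite R" using less.prems(2) unfolding R_def by simp
      have cF: "card F = card R + card T" using FRT RT card_Un_disjoint[OF finR finT] by simp
      have RB: "R \<subseteq> binom_N (Suc e)" using less.prems(1) unfolding R_def by auto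
      have IHR: "ff (Suc e) (card R) \<le> card (Incs R)"
        using less.hyps[of R] cF x1 RB finR by simp
      have T'B: "T' \<subseteq> binom_N e" unfolding T'_def T_def using T'_binom[OF less.prems(1)] .
      have IHT: "ff e (card T') \<le> card (Incs T')"
        using Suc.IH[OF T'B] finT unfolding T'_def by simp
      have finRT: "finite (Incs R \<union> T)" using D5 finT by simp
      have c1: "card (Incs R) \<le> card (Incs R \<union> T)" using card_mono[OF finRT] by simp
      have "R \<subseteq> Incs R" using self_Incs S(5) unfolding R_def by auto
      then have "F \<subseteq> Incs R \<union> T" using FRT by auto
      then have c2: "card F \<le> card (Incs R \<union> T)" using card_mono[OF finRT] by simp
      have K: "ff (Suc e) (card F) \<le> ff e (card T) + max (ff (Suc e) (card F - card T)) (card F)"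
        using ff_K[of "card T" "card F" e] x1 cF by simp
      have "card F - card T = card R" using cF by simp
      then show ?thesis using K IHR IHT cT c1 c2 cardsplit by (simp add: max_def split: if_splits)
    qed
  qed
qed



lemma card_subsets_lt: "card {u. u \<subseteq> {1..<L} \<and> card u = k} = (L - 1) choose k"
  using n_subsets[of "{1..<L}" k] by simp

lemma card_subsets_le: "card {u. u \<subseteq> {1..L} \<and> card u = k} = L choose k"
  using n_subsets[of "{1..L}" k] by simp

lemma compressed_R:
  assumes C: "compressed (Suc e) F" and ne: "F \<noteq> {}"
  defines "L \<equiv> Max (\<Union>F)"
  shows "{u\<in>F. L \<notin> u} = {u. u \<subseteq> {1..<L} \<and> card u = Suc e}"
proof -
  have FB: "F \<subseteq> binom_N (Suc e)" and fin: "finite F" using C unfolding compressed_def by auto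
  note S = setupL[OF FB fin ne]
  have bound: "\<forall>u\<in>F. \<forall>x\<in>u. x \<le> L" using S unfolding L_def by auto
  obtain v where v: "v \<in> F" "L \<in> v" using S(4) unfolding L_def by auto
  show ?thesis
  proof
    show "{u\<in>F. L \<notin> u} \<subseteq> {u. u \<subseteq> {1..<L} \<and> card u = Suc e}"
    proof
      fix u assume u: "u \<in> {u\<in>F. L \<notin> u}"
      then have uF: "u \<in> F" "L \<notin> u" by auto
      have "\<forall>x\<in>u. 1 \<le> x \<and> x < L"
      proof
        fix x assume x: "x \<in> u"
        then have "x \<le> L" "x \<noteq> L" "1 \<le> x" using bound S(5) uF by auto
        then show "1 \<le> x \<and> x < L" by simp
      qed
      moreover have "card u = Suc e" using u FB unfolding binom_N_def by auto
      ultimately show "u \<in> {u. u \<subseteq> {1..<L} \<and> card u = Suc e}" by auto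
    qed
  next
    show "{u. u \<subseteq> {1..<L} \<and> card u = Suc e} \<subseteq> {u\<in>F. L \<notin> u}"
    proof
      fix u assume u: "u \<in> {u. u \<subseteq> {1..<L} \<and> card u = Suc e}"
      then have us: "u \<subseteq> {1..<L}" and cu: "card u = Suc e" by auto
      have finu: "finite u" using us finite_subset by blast
      have uB: "u \<in> binom_N (Suc e)" using us cu finu unfolding binom_N_def by auto
      have Lu: "L \<notin> u" using us by auto
      have finv: "finite v" using v S(5) by auto
      have sq: "squashed_less u v"
        unfolding squashed_less_def
      proof
        show "u \<noteq> v" using Lu v by auto
        let ?D = "(u - v) \<union> (v - u)"
        have finD: "finite ?D" using finu finv by simp
        have LD: "L \<in> ?D" using Lu v by auto
        have Dle: "\<forall>x\<in>?D. x \<le> L" using us v bound by auto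
        have "Max ?D = L" using finD LD Dle by (intro Max_eqI) auto
        then show "Max ?D \<in> v" using v by simp
      qed
      have "u \<in> F" using C v uB sq unfolding compressed_def by blast
      then show "u \<in> {u\<in>F. L \<notin> u}" using Lu by simp
    qed
  qed
qed

lemma compressed_T':
  assumes C: "compressed (Suc e) F" and ne: "F \<noteq> {}"
  defines "L \<equiv> Max (\<Union>F)"
  shows "compressed e ((\<lambda>u. u - {L}) ` {u\<in>F. L \<in> u})"
proof -
  have FB: "F \<subseteq> binom_N (Suc e)" and fin: "finite F" using C unfolding compressed_def by auto
  note S = setupL[OF FB fin ne]
  have bound: "\<forall>u\<in>F. \<forall>x\<in>u. x \<le> L" and L1: "1 \<le> L" using S unfolding L_def by auto
  let ?T' = "(\<lambda>u. u - {L}) ` {u\<in>F. L \<in> u}"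
  show ?thesis
    unfolding compressed_def
  proof (intro conjI allI impI)
    show "finite ?T'" using fin by simp
    show "?T' \<subseteq> binom_N e" by (rule T'_binom[OF FB])
    fix w' w assume w: "w \<in> ?T'" and w'B: "w' \<in> binom_N e" and sq: "squashed_less w' w"
    then obtain v where v: "v \<in> F" "L \<in> v" "w = v - {L}" by auto
    have finv: "finite v" using v S(5) by auto
    have wL: "\<forall>x\<in>w. x < L" using v bound by (auto simp: le_neq_implies_less)
    have finw': "finite w'" and cw': "card w' = e" and pw': "\<forall>x\<in>w'. 1 \<le> x"
      using w'B unfolding binom_N_def by auto
    have finw: "finite w" using finv v by simp
    let ?D = "(w' - w) \<union> (w - w')"
    have neq: "w' \<noteq> w" and mD: "Max ?D \<in> w" using sq unfolding squashed_less_def by auto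
    have finD: "finite ?D" using finw finw' by simp
    have w'L: "\<forall>x\<in>w'. x < L"
    proof (rule ccontr)
      assume "\<not> (\<forall>x\<in>w'. x < L)"
      then obtain x where x: "x \<in> w'" "L \<le> x" by auto
      then have "x \<notin> w" using wL by auto
      then have "x \<in> ?D" using x by auto
      then have "x \<le> Max ?D" using finD by simp
      moreover have "Max ?D < L" using mD wL by auto
      ultimately show False using x by simp
    qed
    define u' where "u' = insert L w'"
    have Lw': "L \<notin> w'" using w'L by auto
    have u'B: "u' \<in> binom_N (Suc e)"
      using finw' cw' pw' Lw' L1 unfolding u'_def binom_N_def by auto
    have vw: "v = insert L w" using v by auto
    have Lw: "L \<notin> w" using v by simp
    have sq2: "squashed_less u' v"
      unfolding squashed_less_def
    proof
      show "u' \<noteq> v" using neq Lw Lw' unfolding u'_def vw by (metis insert_ident)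
      have "(u' - v) \<union> (v - u') = ?D" unfolding u'_def vw using Lw Lw' by auto
      then show "Max ((u' - v) \<union> (v - u')) \<in> v" using mD vw by simp
    qed
    have "u' \<in> F" using C v(1) u'B sq2 unfolding compressed_def by blast
    moreover have "L \<in> u'" unfolding u'_def by simp
    moreover have "w' = u' - {L}" unfolding u'_def using Lw' by simp
    ultimately show "w' \<in> ?T'" by blast
  qed
qed

lemma UB: "compressed d F \<Longrightarrow> card (Incs F) \<le> ff d (card F)"
proof (induction d arbitrary: F)
  case 0
  have "F \<subseteq> binom_N 0" using 0 unfolding compressed_def by auto
  then have F0: "\<forall>u\<in>F. u = {}" unfolding binom_N_def by auto
  have "Incs F \<subseteq> F"
  proof
    fix z assume "z \<in> Incs F"
    then obtain u k where "z = sig k ` u" "u \<in> F" unfolding Incs_def by auto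
    then show "z \<in> F" using F0 by auto
  qed
  moreover have "finite F" using 0 unfolding compressed_def by auto
  ultimately show ?case using card_mono by fastforce
next
  case (Suc e)
  show ?case
  proof (cases "F = {}")
    case True
    then have "Incs F = {}" unfolding Incs_def by auto
    then show ?thesis by simp
  next
    case False
    have FB: "F \<subseteq> binom_N (Suc e)" and fin: "finite F" using Suc.prems unfolding compressed_def by auto
    note S = setupL[OF FB fin False]
    define L where "L = Max (\<Union>F)"
    define T where "T = {u\<in>F. L \<in> u}"
    define R where "R = {u\<in>F. L \<notin> u}"
    define T' where "T' = (\<lambda>u. u - {L}) ` T"
    have bound: "\<forall>u\<in>F. \<forall>x\<in>u. x \<le> L" and L1: "1 \<le> L" using S unfolding L_def by auto
    note D = decomp[OF S(5) bound L1]
    have cardsplit: "card (Incs F) = card (Incs R \<union> T) + card (Incs T')"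
      using card_Incs_split[OF S(5) bound L1 fin] unfolding R_def T_def T'_def by simp
    have Req: "R = {u. u \<subseteq> {1..<L} \<and> card u = Suc e}"
      using compressed_R[OF Suc.prems False] unfolding R_def L_def by simp
    have cR: "card R = (L - 1) choose Suc e" using Req card_subsets_lt by simp
    have CT': "compressed e T'" using compressed_T'[OF Suc.prems False] unfolding T'_def T_def L_def by simp
    have IH: "card (Incs T') \<le> ff e (card T')" using Suc.IH[OF CT'] .
    have Tne: "T \<noteq> {}" using S(4) unfolding T_def L_def by auto
    have finT: "finite T" using fin unfolding T_def by simp
    have cT: "card T' = card T" unfolding T'_def T_def by (rule card_T')
    have x1: "1 \<le> card T" using Tne finT by (simp add: Suc_le_eq card_gt_0_iff)
    have FRT: "F = R \<union> T" unfolding R_def T_def by auto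
    have RT: "R \<inter> T = {}" unfolding R_def T_def by auto
    have finR: "finite R" using fin unfolding R_def by simp
    have cF: "card F = card R + card T" using FRT RT card_Un_disjoint[OF finR finT] by simp
    have T'sub: "T' \<subseteq> {u. u \<subseteq> {1..<L} \<and> card u = e}"
    proof
      fix w assume "w \<in> T'"
      then obtain v where v: "v \<in> F" "L \<in> v" "w = v - {L}" unfolding T'_def T_def by auto
      have "v \<in> binom_N (Suc e)" using v FB by auto
      then have "finite v" "card v = Suc e" "\<forall>x\<in>v. 1 \<le> x" unfolding binom_N_def by auto
      moreover have "\<forall>x\<in>v. x \<le> L" using bound v by auto
      ultimately show "w \<in> {u. u \<subseteq> {1..<L} \<and> card u = e}" using v by (auto simp: le_neq_implies_less)
    qed
    have cT'le: "card T' \<le> (L - 1) choose e"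
      using card_mono[OF _ T'sub] card_subsets_lt[of L e] by (simp add: finite_subset)
    have RTsub: "Incs R \<union> T \<subseteq> {u. u \<subseteq> {1..L} \<and> card u = Suc e}"
    proof
      fix z assume z: "z \<in> Incs R \<union> T"
      have zL: "\<forall>x\<in>z. x \<le> L" using D(4) z unfolding R_def T_def by blast
      show "z \<in> {u. u \<subseteq> {1..L} \<and> card u = Suc e}"
      proof (cases "z \<in> T")
        case True
        then have "z \<in> binom_N (Suc e)" using FB unfolding T_def by auto
        then show ?thesis using zL unfolding binom_N_def by auto
      next
        case False
        then have "z \<in> Incs R" using z by simp
        then obtain u k where uk: "z = sig k ` u" "u \<in> R" unfolding Incs_def by auto
        then have uB: "u \<in> binom_N (Suc e)" using FB unfolding R_def by auto
        have "card z = Suc e" using uk uB card_image[OF inj_on_subset[OF inj_sig subset_UNIV]] unfolding binom_N_def by auto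
        moreover have "\<forall>x\<in>z. 1 \<le> x" using uk uB unfolding binom_N_def sig_def by auto
        ultimately show ?thesis using zL by auto
      qed
    qed
    have cRT: "card (Incs R \<union> T) \<le> L choose Suc e"
      using card_mono[OF _ RTsub] card_subsets_le[of L "Suc e"] by simp
    have B1: "ff (Suc e) (((L - 1) choose Suc e) + card T) = (Suc (L - 1) choose Suc e) + ff e (card T)"
      using ff_B1[of "card T" "L - 1" e] x1 cT'le cT by simp
    have "Suc (L - 1) = L" using L1 by simp
    then show ?thesis using B1 cF cR cardsplit cRT IH cT by simp
  qed
qed

theorem theorem1p4:
  fixes d :: nat and F :: "nat set set"
  assumes "d \<ge> 1" and "compressed d F"
  shows "\<forall>F'. F' \<subseteq> binom_N d \<and> finite F' \<and> card F' = card F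
           \<longrightarrow> card (Inc_image F') \<ge> card (Inc_image F)"
proof (intro allI impI)
  fix F' assume F': "F' \<subseteq> binom_N d \<and> finite F' \<and> card F' = card F"
  have FB: "F \<subseteq> binom_N d" using assms(2) unfolding compressed_def by auto
  have posF: "\<forall>u\<in>F. finite u \<and> (\<forall>x\<in>u. 1 \<le> x)" using FB unfolding binom_N_def by auto
  have posF': "\<forall>u\<in>F'. finite u \<and> (\<forall>x\<in>u. 1 \<le> x)" using F' unfolding binom_N_def by auto
  have "card (Inc_image F) = card (Incs F)" using Inc_eq[OF posF] by simp
  also have "\<dots> \<le> ff d (card F)" using UB[OF assms(2)] .
  also have "\<dots> = ff d (card F')" using F' by simp
  also have "\<dots> \<le> card (Incs F')" using LB F' by blast
  also have "\<dots> = card (Inc_image F')" using Inc_eq[OF posF'] by simp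
  finally show "card (Inc_image F') \<ge> card (Inc_image F)" .
qed


end
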